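(* Let $f=\sum_{j=1}^n f_j\mathbb{1}_{\Delta_j}$, where $f_1,\dots,f_n\in\mathbb{R}\setminus\{0\}$ are pairwise distinct and $\Delta_1,\dots,\Delta_n\in\mathcal{B}(\mathbb{R}^d)$ are pairwise disjoint with finite Lebesgue measure and $\nu_d(\Delta_1)>0$. Suppose $\sum_{j=2}^n \left(\frac{|f_j|}{|f_1|}\right)^{\beta+\frac{c-1}{2}}\frac{\nu_d(\Delta_j)}{\nu_d(\Delta_1)}<1.$ Then for every $v\in L^2(\mathbb{R}^\times,|x|^c dx)$ the equation $v(x)=\int_{\mathrm{supp}(f)}\frac{u(f(s))}{|f(s)|}w(x/f(s))\,ds$ ($x\in\mathbb{R}^\times$) has a unique solution $w\in L^2(\mathbb{R}^\times,|x|^c dx)$.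
   Context: $\mathbb{R}^\times=\mathbb{R}\setminus\{0\}$; $\nu_d$ is Lebesgue measure on $\mathbb{R}^d$; $\mathrm{supp}(f)=\{s: f(s)\neq0\}$. Fix $c\ge0$, $\beta\in\mathbb{R}$, and $u:\mathbb{R}^\times\to\mathbb{R}$ either $u(x)=|x|^\beta$ or $u(x)=\mathrm{sgn}(x)|x|^\beta$. *)

theory Defs
  imports "HOL-Analysis.Analysis"
begin

text \<open>Weighted measure |x|^c dx on the reals (the point 0 is a null set, so this
  is the measure on the punctured line).\<close>
definition weighted_measure :: "real \<Rightarrow> real measure" where
  "weighted_measure c = density lborel (\<lambda>x. ennreal (\<bar>x\<bar> powr c))"

text \<open>Membership in L^2(R^x, |x|^c dx) (representatives; equality is a.e.).\<close>
definition L2w :: "real \<Rightarrow> (real \<Rightarrow> real) \<Rightarrow> bool" where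
  "L2w c w \<longleftrightarrow> w \<in> borel_measurable borel \<and> integrable (weighted_measure c) (\<lambda>x. (w x)\<^sup>2)"

definition simple_fun :: "nat \<Rightarrow> (nat \<Rightarrow> real) \<Rightarrow> (nat \<Rightarrow> 'd set) \<Rightarrow> 'd \<Rightarrow> real" where
  "simple_fun n fv \<Delta> s = (\<Sum>j=1..n. fv j * indicator (\<Delta> j) s)"

definition supp :: "('d \<Rightarrow> real) \<Rightarrow> 'd set" where
  "supp f = {s. f s \<noteq> 0}"

definition rhs_op :: "(real \<Rightarrow> real) \<Rightarrow> ('d::euclidean_space \<Rightarrow> real) \<Rightarrow> (real \<Rightarrow> real) \<Rightarrow> real \<Rightarrow> real" where
  "rhs_op u f w x = (LINT s : supp f | lborel. u (f s) / \<bar>f s\<bar> * w (x / f s))"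

end

theory Submission imports Defs begin

lemma wm_sets[simp, measurable_cong]: "sets (weighted_measure c) = sets borel"
  by (simp add: weighted_measure_def)

lemma wm_space[simp]: "space (weighted_measure c) = UNIV"
  by (simp add: weighted_measure_def)

lemma wm_nn:
  assumes [measurable]: "f \<in> borel_measurable borel"
  shows "integral\<^sup>N (weighted_measure c) f = (\<integral>\<^sup>+x. ennreal (\<bar>x\<bar> powr c) * f x \<partial>lborel)"
  unfolding weighted_measure_def by (subst nn_integral_density) auto

lemma wm_AE: "(AE x in weighted_measure c. P x) \<longleftrightarrow> (AE x in lborel. P x)"
proof -
  have "(AE x in weighted_measure c. P x) \<longleftrightarrow> (AE x in lborel. 0 < ennreal (\<bar>x\<bar> powr c) \<longrightarrow> P x)"
    unfolding weighted_measure_def by (subst AE_density) auto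
  also have "\<dots> \<longleftrightarrow> (AE x in lborel. P x)"
  proof
    assume "AE x in lborel. 0 < ennreal (\<bar>x\<bar> powr c) \<longrightarrow> P x"
    with AE_lborel_singleton[of "0::real"] show "AE x in lborel. P x"
      by eventually_elim simp
  qed auto
  finally show ?thesis .
qed

definition J :: "real \<Rightarrow> (real \<Rightarrow> real) \<Rightarrow> ennreal" where
  "J c h = (\<integral>\<^sup>+x. ennreal ((h x)\<^sup>2) \<partial>weighted_measure c)"

lemma L2w_iff: "L2w c w \<longleftrightarrow> w \<in> borel_measurable borel \<and> J c w < \<infinity>"
proof
  assume "L2w c w"
  then have m: "w \<in> borel_measurable borel" and i: "integrable (weighted_measure c) (\<lambda>x. (w x)\<^sup>2)"
    by (auto simp: L2w_def)
  from i have "(\<integral>\<^sup>+x. norm ((w x)\<^sup>2) \<partial>weighted_measure c) < \<infinity>"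
    unfolding integrable_iff_bounded by simp
  then show "w \<in> borel_measurable borel \<and> J c w < \<infinity>" using m by (simp add: J_def)
next
  assume a: "w \<in> borel_measurable borel \<and> J c w < \<infinity>"
  then have [measurable]: "w \<in> borel_measurable borel" by simp
  have "integrable (weighted_measure c) (\<lambda>x. (w x)\<^sup>2)"
    using a by (subst integrable_iff_bounded) (simp add: J_def)
  then show "L2w c w" by (simp add: L2w_def)
qed

lemma J_dil:
  assumes [measurable]: "h \<in> borel_measurable borel" and r: "r \<noteq> 0"
  shows "(\<integral>\<^sup>+x. ennreal ((h (r*x))\<^sup>2) \<partial>weighted_measure c) = ennreal (\<bar>r\<bar> powr -(1+c)) * J c h"
proof -
  define L where "L = (\<integral>\<^sup>+x. ennreal (\<bar>x\<bar> powr c) * ennreal ((h (r*x))\<^sup>2) \<partial>lborel)"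
  have "J c h = (\<integral>\<^sup>+x. ennreal (\<bar>x\<bar> powr c) * ennreal ((h x)\<^sup>2) \<partial>lborel)"
    unfolding J_def by (rule wm_nn) measurable
  also have "\<dots> = ennreal \<bar>r\<bar> * (\<integral>\<^sup>+x. ennreal (\<bar>0 + r*x\<bar> powr c) * ennreal ((h (0 + r*x))\<^sup>2) \<partial>lborel)"
    by (rule nn_integral_real_affine) (use r in auto)
  also have "\<dots> = ennreal \<bar>r\<bar> * (\<integral>\<^sup>+x. ennreal (\<bar>r\<bar> powr c) * (ennreal (\<bar>x\<bar> powr c) * ennreal ((h (r*x))\<^sup>2)) \<partial>lborel)"
    by (simp add: abs_mult powr_mult ennreal_mult mult.assoc)
  also have "\<dots> = ennreal \<bar>r\<bar> * (ennreal (\<bar>r\<bar> powr c) * L)"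
    unfolding L_def by (subst nn_integral_cmult) auto
  also have "\<dots> = ennreal (\<bar>r\<bar> powr (1+c)) * L"
    using r by (simp add: powr_add ennreal_mult mult.assoc)
  finally have *: "J c h = ennreal (\<bar>r\<bar> powr (1+c)) * L" .
  have "ennreal (\<bar>r\<bar> powr -(1+c)) * J c h = ennreal (\<bar>r\<bar> powr -(1+c) * \<bar>r\<bar> powr (1+c)) * L"
    unfolding * by (simp add: ennreal_mult mult.assoc)
  also have "\<bar>r\<bar> powr -(1+c) * \<bar>r\<bar> powr (1+c) = 1"
    using r by (simp add: powr_add[symmetric])
  finally have "ennreal (\<bar>r\<bar> powr -(1+c)) * J c h = L" by simp
  moreover have "(\<integral>\<^sup>+x. ennreal ((h (r*x))\<^sup>2) \<partial>weighted_measure c) = L"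
    unfolding L_def by (rule wm_nn) measurable
  ultimately show ?thesis by simp
qed

lemma wCS:
  fixes x t :: "'a \<Rightarrow> real"
  assumes "\<And>i. i \<in> I \<Longrightarrow> t i \<ge> 0" "\<And>i. i \<in> I \<Longrightarrow> t i = 0 \<Longrightarrow> x i = 0"
  shows "(\<Sum>i\<in>I. x i)\<^sup>2 \<le> (\<Sum>i\<in>I. t i) * (\<Sum>i\<in>I. (x i)\<^sup>2 / t i)"
proof -
  have "(\<Sum>i\<in>I. x i) = (\<Sum>i\<in>I. sqrt (t i) * (x i / sqrt (t i)))"
    by (rule sum.cong) (use assms in auto)
  moreover have "(\<Sum>i\<in>I. t i) = (\<Sum>i\<in>I. (sqrt (t i))\<^sup>2)"
    by (rule sum.cong) (use assms in auto)
  moreover have "(\<Sum>i\<in>I. (x i)\<^sup>2 / t i) = (\<Sum>i\<in>I. (x i / sqrt (t i))\<^sup>2)"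
    by (rule sum.cong) (use assms in \<open>auto simp: power_divide\<close>)
  ultimately show ?thesis using Cauchy_Schwarz_ineq_sum by metis
qed


locale dil =
  fixes c :: real and I :: "nat set" and b r t :: "nat \<Rightarrow> real" and q :: real
  assumes finI: "finite I" and r_nz: "\<And>j. j\<in>I \<Longrightarrow> r j \<noteq> 0"
    and t_nn: "\<And>j. j\<in>I \<Longrightarrow> t j \<ge> 0"
    and t_b: "\<And>j. j\<in>I \<Longrightarrow> t j = 0 \<Longrightarrow> b j = 0"
    and t_sq: "\<And>j. j\<in>I \<Longrightarrow> (t j)\<^sup>2 = (b j)\<^sup>2 * \<bar>r j\<bar> powr -(1+c)"
    and sum_t: "sum t I \<le> q" and q_pos: "0 < q" and q_lt: "q < 1"
begin

definition KA :: "(real \<Rightarrow> real) \<Rightarrow> real \<Rightarrow> real" where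
  "KA h y = (\<Sum>j\<in>I. \<bar>b j\<bar> * h (r j * y))"

definition K :: "(real \<Rightarrow> real) \<Rightarrow> real \<Rightarrow> real" where
  "K h y = (\<Sum>j\<in>I. b j * h (r j * y))"

lemma KA_meas[measurable]: assumes [measurable]: "h \<in> borel_measurable borel" shows "KA h \<in> borel_measurable borel"
  unfolding KA_def[abs_def] by measurable

lemma K_meas[measurable]: assumes [measurable]: "h \<in> borel_measurable borel" shows "K h \<in> borel_measurable borel"
  unfolding K_def[abs_def] by measurable

lemma KA_nn: "(\<And>y. h y \<ge> 0) \<Longrightarrow> KA h y \<ge> 0"
  unfolding KA_def by (intro sum_nonneg) auto

lemma coef: "j \<in> I \<Longrightarrow> (b j)\<^sup>2 / t j * \<bar>r j\<bar> powr -(1+c) = t j"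
proof -
  assume j: "j \<in> I"
  show ?thesis
  proof (cases "t j = 0")
    case True then show ?thesis using t_b[OF j] by simp
  next
    case False
    then have "(b j)\<^sup>2 / t j * \<bar>r j\<bar> powr -(1+c) = (t j)\<^sup>2 / t j"
      using t_sq[OF j] by simp
    also have "\<dots> = t j" using False by (simp add: power2_eq_square)
    finally show ?thesis .
  qed
qed

lemma KI:
  assumes [measurable]: "h \<in> borel_measurable borel" and hnn: "\<And>y. h y \<ge> 0"
  shows "J c (KA h) \<le> ennreal (q\<^sup>2) * J c h"
proof -
  define F where "F j y = (\<bar>b j\<bar> * h (r j * y))\<^sup>2 / t j" for j y
  have Fnn: "F j y \<ge> 0" if "j \<in> I" for j y using t_nn[OF that] by (simp add: F_def)
  have pw: "(KA h y)\<^sup>2 \<le> q * (\<Sum>j\<in>I. F j y)" for y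
  proof -
    have "(KA h y)\<^sup>2 \<le> (\<Sum>j\<in>I. t j) * (\<Sum>j\<in>I. F j y)"
      unfolding KA_def F_def by (rule wCS) (use t_nn t_b in auto)
    also have "\<dots> \<le> q * (\<Sum>j\<in>I. F j y)"
      by (rule mult_right_mono) (use sum_t Fnn in \<open>auto intro: sum_nonneg\<close>)
    finally show ?thesis .
  qed
  have [measurable]: "(\<lambda>y. F j y) \<in> borel_measurable borel" for j
    unfolding F_def by measurable
  have Fint: "(\<integral>\<^sup>+y. ennreal (F j y) \<partial>weighted_measure c) = ennreal (t j) * J c h" if j: "j \<in> I" for j
  proof -
    have "(\<integral>\<^sup>+y. ennreal (F j y) \<partial>weighted_measure c)
        = (\<integral>\<^sup>+y. ennreal ((b j)\<^sup>2 / t j) * ennreal ((h (r j * y))\<^sup>2) \<partial>weighted_measure c)"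
      using t_nn[OF j] by (intro nn_integral_cong) (subst ennreal_mult[symmetric], auto simp: F_def power_mult_distrib)
    also have "\<dots> = ennreal ((b j)\<^sup>2 / t j) * (\<integral>\<^sup>+y. ennreal ((h (r j * y))\<^sup>2) \<partial>weighted_measure c)"
      by (rule nn_integral_cmult) measurable
    also have "\<dots> = ennreal ((b j)\<^sup>2 / t j) * (ennreal (\<bar>r j\<bar> powr -(1+c)) * J c h)"
      using J_dil[of h "r j" c] r_nz[OF j] by simp
    also have "\<dots> = ennreal ((b j)\<^sup>2 / t j * \<bar>r j\<bar> powr -(1+c)) * J c h"
      using t_nn[OF j] by (subst ennreal_mult) (auto simp: mult.assoc)
    also have "\<dots> = ennreal (t j) * J c h" using coef[OF j] by simp
    finally show ?thesis .
  qed
  have "J c (KA h) \<le> (\<integral>\<^sup>+y. ennreal q * (\<Sum>j\<in>I. ennreal (F j y)) \<partial>weighted_measure c)"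
    unfolding J_def
  proof (rule nn_integral_mono)
    fix y
    have "ennreal ((KA h y)\<^sup>2) \<le> ennreal (q * (\<Sum>j\<in>I. F j y))"
      using pw by (rule ennreal_leI)
    also have "\<dots> = ennreal q * (\<Sum>j\<in>I. ennreal (F j y))"
      using q_pos Fnn by (simp add: ennreal_mult')
    finally show "ennreal ((KA h y)\<^sup>2) \<le> ennreal q * (\<Sum>j\<in>I. ennreal (F j y))" .
  qed
  also have "\<dots> = ennreal q * (\<Sum>j\<in>I. (\<integral>\<^sup>+y. ennreal (F j y) \<partial>weighted_measure c))"
    by (subst nn_integral_cmult) (auto simp: nn_integral_sum)
  also have "\<dots> = ennreal q * (\<Sum>j\<in>I. ennreal (t j) * J c h)"
    using Fint by simp
  also have "\<dots> = ennreal q * (ennreal (sum t I) * J c h)"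
    using t_nn by (simp add: sum_distrib_right[symmetric])
  also have "\<dots> \<le> ennreal q * (ennreal q * J c h)"
    using sum_t by (intro mult_left_mono mult_right_mono ennreal_leI) auto
  also have "\<dots> = ennreal (q\<^sup>2) * J c h"
    using q_pos by (simp add: ennreal_mult power2_eq_square mult.assoc)
  finally show ?thesis .
qed

end

context dil begin

lemma J_abs: "J c (\<lambda>y. \<bar>h y\<bar>) = J c h"
  by (simp add: J_def)

lemma uniq:
  assumes [measurable]: "h \<in> borel_measurable borel" and fin: "J c h < \<infinity>"
    and ae: "AE y in lborel. h y = - K h y"
  shows "AE y in lborel. h y = 0"
proof -
  have ae2: "AE y in lborel. \<bar>h y\<bar> \<le> KA (\<lambda>y. \<bar>h y\<bar>) y"
    using ae
  proof eventually_elim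
    case (elim y)
    have "\<bar>h y\<bar> = \<bar>\<Sum>j\<in>I. b j * h (r j * y)\<bar>" using elim by (simp add: K_def)
    also have "\<dots> \<le> (\<Sum>j\<in>I. \<bar>b j * h (r j * y)\<bar>)" by (rule sum_abs)
    also have "\<dots> = KA (\<lambda>y. \<bar>h y\<bar>) y" by (simp add: KA_def abs_mult)
    finally show ?case .
  qed
  have "J c h \<le> J c (KA (\<lambda>y. \<bar>h y\<bar>))"
    unfolding J_def
  proof (rule nn_integral_mono_AE)
    show "AE x in weighted_measure c. ennreal ((h x)\<^sup>2) \<le> ennreal ((KA (\<lambda>y. \<bar>h y\<bar>) x)\<^sup>2)"
      unfolding wm_AE using ae2
    proof eventually_elim
      case (elim x)
      then have "(\<bar>h x\<bar>)\<^sup>2 \<le> (KA (\<lambda>y. \<bar>h y\<bar>) x)\<^sup>2"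
        by (intro power_mono) auto
      then show ?case by (intro ennreal_leI) simp
    qed
  qed
  also have "\<dots> \<le> ennreal (q\<^sup>2) * J c (\<lambda>y. \<bar>h y\<bar>)"
    by (rule KI) auto
  finally have le: "J c h \<le> ennreal (q\<^sup>2) * J c h" by (simp add: J_abs)
  obtain X where X: "X \<ge> 0" "J c h = ennreal X" using fin less_top_ennreal by auto
  have "X \<le> q\<^sup>2 * X" using le X q_pos by (simp add: ennreal_mult'[symmetric])
  moreover have "q\<^sup>2 < 1" using q_pos q_lt by (simp add: power_less_one_iff)
  ultimately have "X = 0" using X(1)
    by (metis mult_less_cancel_right2 not_le order.not_eq_order_implies_strict)
  then have "J c h = 0" using X by simp
  then have "AE y in weighted_measure c. ennreal ((h y)\<^sup>2) = 0"
    unfolding J_def by (subst (asm) nn_integral_0_iff_AE) auto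
  then show ?thesis unfolding wm_AE by eventually_elim simp
qed

definition Pk :: "(real \<Rightarrow> real) \<Rightarrow> nat \<Rightarrow> real \<Rightarrow> real" where
  "Pk g k = (KA ^^ k) (\<lambda>y. \<bar>g y\<bar>)"

definition Tk :: "(real \<Rightarrow> real) \<Rightarrow> nat \<Rightarrow> real \<Rightarrow> real" where
  "Tk g k = ((\<lambda>h y. - K h y) ^^ k) g"

lemma Pk_0: "Pk g 0 y = \<bar>g y\<bar>" by (simp add: Pk_def)
lemma Pk_Suc: "Pk g (Suc k) = KA (Pk g k)" by (simp add: Pk_def)
lemma Tk_0: "Tk g 0 = g" by (simp add: Tk_def)
lemma Tk_Suc: "Tk g (Suc k) y = - K (Tk g k) y" by (simp add: Tk_def)

lemma Pk_nn: "Pk g k y \<ge> 0"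
proof (induction k arbitrary: y)
  case 0 then show ?case by (simp add: Pk_0)
next
  case (Suc k) then show ?case by (simp add: Pk_Suc KA_nn)
qed

lemma Tk_le: "\<bar>Tk g k y\<bar> \<le> Pk g k y"
proof (induction k arbitrary: y)
  case 0 then show ?case by (simp add: Pk_0 Tk_0)
next
  case (Suc k)
  have "\<bar>Tk g (Suc k) y\<bar> = \<bar>\<Sum>j\<in>I. b j * Tk g k (r j * y)\<bar>" by (simp add: Tk_Suc K_def)
  also have "\<dots> \<le> (\<Sum>j\<in>I. \<bar>b j * Tk g k (r j * y)\<bar>)" by (rule sum_abs)
  also have "\<dots> \<le> (\<Sum>j\<in>I. \<bar>b j\<bar> * Pk g k (r j * y))"
    by (intro sum_mono) (simp add: abs_mult Suc mult_left_mono)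
  also have "\<dots> = Pk g (Suc k) y" by (simp add: Pk_Suc KA_def)
  finally show ?case .
qed

lemma Pk_meas[measurable]:
  assumes [measurable]: "g \<in> borel_measurable borel" shows "Pk g k \<in> borel_measurable borel"
proof (induction k)
  case 0 then show ?case by (simp add: Pk_def)
next
  case (Suc k) then show ?case by (simp add: Pk_Suc)
qed

lemma Tk_meas[measurable]:
  assumes [measurable]: "g \<in> borel_measurable borel" shows "Tk g k \<in> borel_measurable borel"
proof (induction k)
  case 0 then show ?case by (simp add: Tk_0)
next
  case (Suc k)
  have "Tk g (Suc k) = (\<lambda>y. - K (Tk g k) y)" by (simp add: Tk_Suc[abs_def])
  also have "\<dots> \<in> borel_measurable borel" using Suc by measurable
  finally show ?case .
qed

lemma J_Pk:
  assumes [measurable]: "g \<in> borel_measurable borel"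
  shows "J c (Pk g k) \<le> ennreal (q ^ (2*k)) * J c g"
proof (induction k)
  case 0 then show ?case by (simp add: Pk_def J_abs)
next
  case (Suc k)
  have "J c (Pk g (Suc k)) \<le> ennreal (q\<^sup>2) * J c (Pk g k)"
    unfolding Pk_Suc by (rule KI) (auto simp: Pk_nn)
  also have "\<dots> \<le> ennreal (q\<^sup>2) * (ennreal (q ^ (2*k)) * J c g)"
    by (intro mult_left_mono Suc) auto
  also have "\<dots> = ennreal (q\<^sup>2 * q ^ (2*k)) * J c g"
    using q_pos by (simp add: ennreal_mult mult.assoc)
  also have "q\<^sup>2 * q ^ (2*k) = q ^ (2 * Suc k)" by (simp add: power_add[symmetric])
  finally show ?case .
qed

end

context dil begin

definition Wf :: "(real \<Rightarrow> real) \<Rightarrow> real \<Rightarrow> real" where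
  "Wf g y = lim (\<lambda>N. \<Sum>k<N. Tk g k y)"

lemma Wf_meas[measurable]:
  assumes [measurable]: "g \<in> borel_measurable borel" shows "Wf g \<in> borel_measurable borel"
  unfolding Wf_def[abs_def] by measurable

lemma T_summable: "summable (\<lambda>k. Pk g k y) \<Longrightarrow> summable (\<lambda>k. Tk g k y)"
  by (rule summable_comparison_test'[where N=0]) (auto simp: Tk_le)

lemma Wf_eq: "summable (\<lambda>k. Pk g k y) \<Longrightarrow> Wf g y = (\<Sum>k. Tk g k y)"
  unfolding Wf_def by (rule limI) (rule summable_LIMSEQ, rule T_summable)

lemma Wf_le: "summable (\<lambda>k. Pk g k y) \<Longrightarrow> \<bar>Wf g y\<bar> \<le> (\<Sum>k. Pk g k y)"
  using norm_suminf_le[of "\<lambda>k. Tk g k y" "\<lambda>k. Pk g k y"] Tk_le Wf_eq by auto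

lemma good_shift:
  assumes s: "summable (\<lambda>k. Pk g k y)" and j: "j \<in> I" and bj: "b j \<noteq> 0"
  shows "summable (\<lambda>k. Pk g k (r j * y))"
proof (rule summable_comparison_test'[where N=0])
  show "summable (\<lambda>k. Pk g (Suc k) y / \<bar>b j\<bar>)"
  proof (rule summable_divide)
    show "summable (\<lambda>k. Pk g (Suc k) y)" using summable_Suc_iff[of "\<lambda>k. Pk g k y"] s by simp
  qed
  fix k :: nat
  have "\<bar>b j\<bar> * Pk g k (r j * y) \<le> (\<Sum>i\<in>I. \<bar>b i\<bar> * Pk g k (r i * y))"
    by (rule member_le_sum[where f = "\<lambda>i. \<bar>b i\<bar> * Pk g k (r i * y)"])
       (use j finI Pk_nn in auto)
  also have "\<dots> = Pk g (Suc k) y" by (simp add: Pk_Suc KA_def)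
  finally show "norm (Pk g k (r j * y)) \<le> Pk g (Suc k) y / \<bar>b j\<bar>"
    using bj Pk_nn by (simp add: field_simps)
qed

lemma fix_pt:
  assumes s: "summable (\<lambda>k. Pk g k y)"
  shows "Wf g y = g y - K (Wf g) y"
proof -
  have sT: "summable (\<lambda>k. Tk g k y)" using s by (rule T_summable)
  have sj: "summable (\<lambda>k. b j * Tk g k (r j * y))" if j: "j \<in> I" for j
  proof (cases "b j = 0")
    case True then show ?thesis by simp
  next
    case False
    then show ?thesis using T_summable[OF good_shift[OF s j False]] by (intro summable_mult)
  qed
  have ej: "(\<Sum>k. b j * Tk g k (r j * y)) = b j * Wf g (r j * y)" if j: "j \<in> I" for j
  proof (cases "b j = 0")
    case True then show ?thesis by simp
  next
    case False
    then show ?thesis using T_summable[OF good_shift[OF s j False]] Wf_eq[OF good_shift[OF s j False]]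
      by (simp add: suminf_mult)
  qed
  have "Wf g y = (\<Sum>k. Tk g k y)" using s by (rule Wf_eq)
  also have "\<dots> = Tk g 0 y + (\<Sum>k. Tk g (Suc k) y)" using suminf_split_head[OF sT] by simp
  also have "(\<Sum>k. Tk g (Suc k) y) = (\<Sum>k. - (\<Sum>j\<in>I. b j * Tk g k (r j * y)))"
    by (simp add: Tk_Suc K_def)
  also have "\<dots> = - (\<Sum>k. \<Sum>j\<in>I. b j * Tk g k (r j * y))"
    by (rule suminf_minus) (intro summable_sum sj)
  also have "(\<Sum>k. \<Sum>j\<in>I. b j * Tk g k (r j * y)) = (\<Sum>j\<in>I. \<Sum>k. b j * Tk g k (r j * y))"
    by (rule suminf_sum) (rule sj)
  also have "\<dots> = K (Wf g) y" unfolding K_def by (rule sum.cong) (auto simp: ej)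
  finally show ?thesis by (simp add: Tk_0)
qed

lemma pt_bound:
  assumes fin: "(\<Sum>k. ennreal ((Pk g k y)\<^sup>2 / q ^ k)) \<noteq> \<infinity>"
  shows "summable (\<lambda>k. Pk g k y)"
    and "ennreal ((Wf g y)\<^sup>2) \<le> ennreal (1 / (1 - q)) * (\<Sum>k. ennreal ((Pk g k y)\<^sup>2 / q ^ k))"
proof -
  define a where "a k = (Pk g k y)\<^sup>2 / q ^ k" for k
  have a_nn: "a k \<ge> 0" for k using q_pos by (simp add: a_def)
  have sa: "summable a" using fin a_nn unfolding a_def[symmetric] by (intro summable_suminf_not_top) auto
  define e where "e = (\<Sum>k. a k)"
  have Ee: "(\<Sum>k. ennreal ((Pk g k y)\<^sup>2 / q ^ k)) = ennreal e"
    unfolding e_def a_def[symmetric] using a_nn sa by (rule suminf_ennreal2)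
  have geo: "(\<Sum>k<M. q ^ k) \<le> 1 / (1 - q)" for M
  proof -
    have "(\<Sum>k<M. q ^ k) \<le> (\<Sum>k. q ^ k)"
      by (rule sum_le_suminf) (use q_pos q_lt in \<open>auto intro: summable_geometric\<close>)
    also have "\<dots> = 1 / (1 - q)" using q_pos q_lt by (intro suminf_geometric) auto
    finally show ?thesis .
  qed
  have part: "(\<Sum>k<M. Pk g k y)\<^sup>2 \<le> e / (1 - q)" for M
  proof -
    have "(\<Sum>k<M. Pk g k y)\<^sup>2 \<le> (\<Sum>k<M. q ^ k) * (\<Sum>k<M. (Pk g k y)\<^sup>2 / q ^ k)"
      by (rule wCS) (use q_pos in auto)
    also have "\<dots> \<le> (1 / (1 - q)) * e"
    proof (rule mult_mono)
      show "(\<Sum>k<M. (Pk g k y)\<^sup>2 / q ^ k) \<le> e"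
        unfolding e_def a_def[symmetric] by (rule sum_le_suminf) (use sa a_nn in auto)
    qed (use geo q_pos q_lt in \<open>auto intro: sum_nonneg\<close>)
    finally show ?thesis by simp
  qed
  have part2: "(\<Sum>k<M. Pk g k y) \<le> sqrt (e / (1 - q))" for M
    using part[of M] by (simp add: real_le_rsqrt)
  show s: "summable (\<lambda>k. Pk g k y)"
    by (rule summableI_nonneg_bounded[OF Pk_nn part2])
  have "(\<Sum>k. Pk g k y) \<le> sqrt (e / (1 - q))"
    by (rule suminf_le_const[OF s part2])
  moreover have "\<bar>Wf g y\<bar> \<le> (\<Sum>k. Pk g k y)" using s by (rule Wf_le)
  ultimately have "\<bar>Wf g y\<bar> \<le> sqrt (e / (1 - q))" by linarith
  then have "(Wf g y)\<^sup>2 \<le> e / (1 - q)"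
    by (metis abs_le_square_iff abs_of_nonneg real_sqrt_abs real_sqrt_ge_zero real_sqrt_le_iff)
  then have "ennreal ((Wf g y)\<^sup>2) \<le> ennreal (1 / (1 - q) * e)" by (intro ennreal_leI) simp
  also have "\<dots> = ennreal (1 / (1 - q)) * ennreal e" using q_lt by (intro ennreal_mult') simp
  finally show "ennreal ((Wf g y)\<^sup>2) \<le> ennreal (1 / (1 - q)) * (\<Sum>k. ennreal ((Pk g k y)\<^sup>2 / q ^ k))"
    by (simp add: Ee)
qed

end

context dil begin

lemma exist:
  assumes [measurable]: "g \<in> borel_measurable borel" and Jg: "J c g < \<infinity>"
  shows "Wf g \<in> borel_measurable borel \<and> J c (Wf g) < \<infinity> \<and> (AE y in lborel. Wf g y = g y - K (Wf g) y)"
proof -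
  define E where "E y = (\<Sum>k. ennreal ((Pk g k y)\<^sup>2 / q ^ k))" for y
  have [measurable]: "E \<in> borel_measurable borel" unfolding E_def[abs_def] by measurable
  have each: "(\<integral>\<^sup>+y. ennreal ((Pk g k y)\<^sup>2 / q ^ k) \<partial>weighted_measure c) \<le> ennreal (q ^ k) * J c g" for k
  proof -
    have "(\<integral>\<^sup>+y. ennreal ((Pk g k y)\<^sup>2 / q ^ k) \<partial>weighted_measure c)
        = (\<integral>\<^sup>+y. ennreal (1 / q ^ k) * ennreal ((Pk g k y)\<^sup>2) \<partial>weighted_measure c)"
      using q_pos by (intro nn_integral_cong) (subst ennreal_mult[symmetric], auto)
    also have "\<dots> = ennreal (1 / q ^ k) * J c (Pk g k)"
      unfolding J_def by (rule nn_integral_cmult) measurable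
    also have "\<dots> \<le> ennreal (1 / q ^ k) * (ennreal (q ^ (2*k)) * J c g)"
      by (intro mult_left_mono J_Pk) auto
    also have "\<dots> = ennreal (1 / q ^ k * q ^ (2*k)) * J c g"
      using q_pos by (subst ennreal_mult) (auto simp: mult.assoc)
    also have "1 / q ^ k * q ^ (2*k) = q ^ k"
    proof -
      have "q ^ (2*k) = q ^ k * q ^ k" by (simp add: mult_2 power_add)
      then show ?thesis using q_pos by simp
    qed
    finally show ?thesis .
  qed
  have "integral\<^sup>N (weighted_measure c) E = (\<Sum>k. \<integral>\<^sup>+y. ennreal ((Pk g k y)\<^sup>2 / q ^ k) \<partial>weighted_measure c)"
    unfolding E_def by (rule nn_integral_suminf) measurable
  also have "\<dots> \<le> (\<Sum>k. ennreal (q ^ k) * J c g)"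
    by (rule suminf_le[OF each summableI summableI])
  also have "\<dots> = (\<Sum>k. ennreal (q ^ k)) * J c g"
    using ennreal_suminf_cmult[of "J c g" "\<lambda>k. ennreal (q ^ k)"] by (simp add: mult.commute)
  also have "(\<Sum>k. ennreal (q ^ k)) = ennreal (\<Sum>k. q ^ k)"
    using q_pos q_lt by (intro suminf_ennreal2) (auto intro: summable_geometric)
  also have "(\<Sum>k. q ^ k) = 1 / (1 - q)" using q_pos q_lt by (intro suminf_geometric) auto
  finally have intE: "integral\<^sup>N (weighted_measure c) E \<le> ennreal (1 / (1 - q)) * J c g" .
  have intE_fin: "integral\<^sup>N (weighted_measure c) E < \<infinity>"
  proof (rule le_less_trans[OF intE])
    show "ennreal (1 / (1 - q)) * J c g < \<infinity>" using Jg by (auto simp: ennreal_mult_less_top)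
  qed
  have aeE: "AE y in lborel. E y \<noteq> \<infinity>"
    using nn_integral_PInf_AE[of E "weighted_measure c"] intE_fin unfolding wm_AE by auto
  have ae_fix: "AE y in lborel. Wf g y = g y - K (Wf g) y"
    using aeE by eventually_elim (intro fix_pt pt_bound(1), simp add: E_def)
  have "J c (Wf g) \<le> (\<integral>\<^sup>+y. ennreal (1 / (1 - q)) * E y \<partial>weighted_measure c)"
    unfolding J_def
  proof (rule nn_integral_mono_AE)
    show "AE y in weighted_measure c. ennreal ((Wf g y)\<^sup>2) \<le> ennreal (1 / (1 - q)) * E y"
      unfolding wm_AE using aeE by eventually_elim (unfold E_def, rule pt_bound(2), simp add: E_def)
  qed
  also have "\<dots> = ennreal (1 / (1 - q)) * integral\<^sup>N (weighted_measure c) E"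
    by (rule nn_integral_cmult) measurable
  also have "\<dots> < \<infinity>" using intE_fin by (simp add: ennreal_mult_less_top)
  finally show ?thesis using ae_fix by simp
qed

end

lemma AE_scale:
  fixes s :: real
  assumes ae: "AE y in lborel. P y" and s: "s \<noteq> 0"
  shows "AE x in lborel. P (s * x)"
proof -
  from ae obtain N where N: "{y \<in> space lborel. \<not> P y} \<subseteq> N" "emeasure lborel N = 0" "N \<in> sets lborel"
    by (rule AE_E)
  have [measurable]: "N \<in> sets borel" using N(3) by simp
  have "(\<integral>\<^sup>+y. indicator N y \<partial>lborel) = ennreal \<bar>s\<bar> * (\<integral>\<^sup>+x. indicator N (0 + s * x) \<partial>lborel)"
    by (rule nn_integral_real_affine) (use s in auto)
  moreover have "(\<integral>\<^sup>+y. indicator N y \<partial>lborel) = 0" using N(2,3) by simp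
  moreover have "(\<lambda>x. indicator N (0 + s * x)) = (\<lambda>x. indicator ((\<lambda>x. s * x) -` N) x :: ennreal)"
    by (auto simp: indicator_def)
  ultimately have "ennreal \<bar>s\<bar> * (\<integral>\<^sup>+x. indicator ((\<lambda>x. s * x) -` N) x \<partial>lborel) = 0"
    by simp
  then have "(\<integral>\<^sup>+x. indicator ((\<lambda>x. s * x) -` N) x \<partial>lborel) = 0" using s by simp
  moreover have "(\<lambda>x. s * x) -` N \<in> sets lborel"
  proof -
    have "(\<lambda>x. s * x) -` N \<inter> space borel \<in> sets borel"
      by (rule measurable_sets[OF _ \<open>N \<in> sets borel\<close>]) measurable
    then show ?thesis by simp
  qed
  ultimately have "emeasure lborel ((\<lambda>x. s * x) -` N) = 0" by simp
  then show ?thesis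
    using \<open>(\<lambda>x. s * x) -` N \<in> sets lborel\<close> N(1)
    by (intro AE_I'[where N="(\<lambda>x. s * x) -` N"]) auto
qed

lemma simple_fun_in:
  assumes disj: "disjoint_family_on \<Delta> {1..n}" and j: "j \<in> {1..n}" and s: "s \<in> \<Delta> j"
  shows "simple_fun n fv \<Delta> s = fv j"
proof -
  have "simple_fun n fv \<Delta> s = fv j * indicator (\<Delta> j) s + (\<Sum>i\<in>{1..n}-{j}. fv i * indicator (\<Delta> i) s)"
    unfolding simple_fun_def using j by (subst sum.remove[of _ j]) auto
  also have "(\<Sum>i\<in>{1..n}-{j}. fv i * indicator (\<Delta> i) s) = 0"
  proof (rule sum.neutral, intro ballI)
    fix i assume i: "i \<in> {1..n}-{j}"
    then have "s \<notin> \<Delta> i" using disj j s unfolding disjoint_family_on_def by blast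
    then show "fv i * indicator (\<Delta> i) s = 0" by simp
  qed
  finally show ?thesis using s by simp
qed

lemma simple_fun_out:
  assumes "s \<notin> (\<Union>j\<in>{1..n}. \<Delta> j)"
  shows "simple_fun n fv \<Delta> s = 0"
  using assms unfolding simple_fun_def by (intro sum.neutral) auto

lemma rhs_sum:
  fixes \<Delta> :: "nat \<Rightarrow> 'd::euclidean_space set"
  assumes fv_nz: "\<forall>j\<in>{1..n}. fv j \<noteq> 0"
    and \<Delta>_borel: "\<forall>j\<in>{1..n}. \<Delta> j \<in> sets borel"
    and \<Delta>_disj: "disjoint_family_on \<Delta> {1..n}"
    and \<Delta>_fin: "\<forall>j\<in>{1..n}. emeasure lborel (\<Delta> j) < \<infinity>"
  shows "rhs_op u (simple_fun n fv \<Delta>) w x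
       = (\<Sum>j=1..n. measure lborel (\<Delta> j) * (u (fv j) / \<bar>fv j\<bar> * w (x / fv j)))"
proof -
  let ?f = "simple_fun n fv \<Delta>"
  define C where "C j = u (fv j) / \<bar>fv j\<bar> * w (x / fv j)" for j
  have pw: "indicator (supp ?f) s *\<^sub>R (u (?f s) / \<bar>?f s\<bar> * w (x / ?f s))
      = (\<Sum>j=1..n. indicator (\<Delta> j) s * C j)" for s
  proof (cases "\<exists>j\<in>{1..n}. s \<in> \<Delta> j")
    case True
    then obtain j where j: "j \<in> {1..n}" "s \<in> \<Delta> j" by blast
    have fs: "?f s = fv j" by (rule simple_fun_in[OF \<Delta>_disj j])
    have "(\<Sum>i=1..n. indicator (\<Delta> i) s * C i) = indicator (\<Delta> j) s * C j + (\<Sum>i\<in>{1..n}-{j}. indicator (\<Delta> i) s * C i)"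
      using j(1) by (subst sum.remove[of _ j]) auto
    also have "(\<Sum>i\<in>{1..n}-{j}. indicator (\<Delta> i) s * C i) = 0"
    proof (rule sum.neutral, intro ballI)
      fix i assume i: "i \<in> {1..n}-{j}"
      then have "s \<notin> \<Delta> i" using \<Delta>_disj j unfolding disjoint_family_on_def by blast
      then show "indicator (\<Delta> i) s * C i = 0" by simp
    qed
    finally show ?thesis using fs j fv_nz by (simp add: supp_def C_def indicator_def)
  next
    case False
    then have "?f s = 0" by (intro simple_fun_out) auto
    moreover have "(\<Sum>i=1..n. indicator (\<Delta> i) s * C i) = 0"
      using False by (intro sum.neutral) auto
    ultimately show ?thesis by (simp add: supp_def)
  qed
  have "rhs_op u ?f w x = (\<integral>s. (\<Sum>j=1..n. indicator (\<Delta> j) s * C j) \<partial>lborel)"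
    unfolding rhs_op_def set_lebesgue_integral_def using pw by simp
  also have "\<dots> = (\<Sum>j=1..n. (\<integral>s. indicator (\<Delta> j) s * C j \<partial>lborel))"
    by (rule Bochner_Integration.integral_sum) (use \<Delta>_borel \<Delta>_fin in auto)
  also have "\<dots> = (\<Sum>j=1..n. measure lborel (\<Delta> j) * C j)"
    by (rule sum.cong) (use \<Delta>_borel \<Delta>_fin in auto)
  finally show ?thesis by (simp add: C_def)
qed


lemma powr_alg:
  fixes X \<beta> c :: real assumes X: "X > 0"
  shows "(X powr (\<beta> + (c - 1) / 2))\<^sup>2 = (X powr (\<beta> - 1))\<^sup>2 * (1 / X) powr -(1+c)"
proof -
  have "(1 / X) powr -(1+c) = X powr (1+c)"
    by (metis inverse_eq_divide inverse_powr powr_minus inverse_inverse_eq)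
  moreover have "(X powr (\<beta> + (c - 1) / 2))\<^sup>2 = X powr (2*\<beta> + c - 1)"
    using X by (simp add: power2_eq_square powr_add[symmetric] algebra_simps)
  moreover have "(X powr (\<beta> - 1))\<^sup>2 * X powr (1+c) = X powr (2*\<beta> + c - 1)"
    using X by (simp add: power2_eq_square powr_add[symmetric] algebra_simps)
  ultimately show ?thesis by simp
qed

lemma absb:
  fixes A B nj n1 \<beta> :: real assumes A: "A > 0" and B: "B > 0" and n1: "n1 > 0"
  shows "(nj * (A powr \<beta> / A)) / (n1 * (B powr \<beta> / B)) = nj / n1 * (A / B) powr (\<beta> - 1)"
  using A B n1 by (simp add: powr_divide powr_diff field_simps)

theorem mainTheorem2:
  fixes c \<beta> :: real and u :: "real \<Rightarrow> real" and n :: nat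
    and fv :: "nat \<Rightarrow> real" and \<Delta> :: "nat \<Rightarrow> 'd::euclidean_space set"
    and v :: "real \<Rightarrow> real"
  assumes c: "c \<ge> 0"
    and u: "u = (\<lambda>x. \<bar>x\<bar> powr \<beta>) \<or> u = (\<lambda>x. sgn x * \<bar>x\<bar> powr \<beta>)"
    and n: "n \<ge> 1"
    and fv_nz: "\<forall>j\<in>{1..n}. fv j \<noteq> 0"
    and fv_inj: "inj_on fv {1..n}"
    and \<Delta>_borel: "\<forall>j\<in>{1..n}. \<Delta> j \<in> sets borel"
    and \<Delta>_disj: "disjoint_family_on \<Delta> {1..n}"
    and \<Delta>_fin: "\<forall>j\<in>{1..n}. emeasure lborel (\<Delta> j) < \<infinity>"
    and \<Delta>1_pos: "measure lborel (\<Delta> 1) > 0"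
    and small: "(\<Sum>j=2..n. (\<bar>fv j\<bar> / \<bar>fv 1\<bar>) powr (\<beta> + (c - 1) / 2)
                   * measure lborel (\<Delta> j) / measure lborel (\<Delta> 1)) < 1"
    and v: "L2w c v"
  shows "\<exists>w. L2w c w
           \<and> (AE x in weighted_measure c. v x = rhs_op u (simple_fun n fv \<Delta>) w x)
           \<and> (\<forall>w'. L2w c w' \<and> (AE x in weighted_measure c. v x = rhs_op u (simple_fun n fv \<Delta>) w' x)
                   \<longrightarrow> (AE x in weighted_measure c. w' x = w x))"
proof -
  define \<nu> where "\<nu> j = measure lborel (\<Delta> j)" for j
  define a where "a j = \<nu> j * (u (fv j) / \<bar>fv j\<bar>)" for j
  have sub: "{2..n} \<subseteq> {1..n}" by auto
  have n1: "1 \<in> {1..n}" using n by simp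
  have f1: "fv 1 \<noteq> 0" using fv_nz n1 by auto
  have fj: "fv j \<noteq> 0" if "j \<in> {2..n}" for j using fv_nz sub that by auto
  have abs_u: "\<bar>u x\<bar> = \<bar>x\<bar> powr \<beta>" if "x \<noteq> 0" for x
    using u that by (auto simp: abs_mult)
  have u_nz: "u x \<noteq> 0" if "x \<noteq> 0" for x
    using abs_u[OF that] that by auto
  have \<nu>1: "\<nu> 1 > 0" using \<Delta>1_pos by (simp add: \<nu>_def)
  have \<nu>nn: "\<nu> j \<ge> 0" for j by (simp add: \<nu>_def)
  have a1: "a 1 \<noteq> 0" using \<nu>1 u_nz[OF f1] f1 by (simp add: a_def)
  define b where "b j = a j / a 1" for j
  define r where "r j = fv 1 / fv j" for j
  define t where "t j = (\<bar>fv j\<bar> / \<bar>fv 1\<bar>) powr (\<beta> + (c - 1) / 2) * \<nu> j / \<nu> 1" for j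
  define q where "q = max (sum t {2..n}) (1/2)"
  have q0: "sum t {2..n} < 1" using small by (simp add: t_def \<nu>_def)
  have absb: "\<bar>b j\<bar> = \<nu> j / \<nu> 1 * (\<bar>fv j\<bar> / \<bar>fv 1\<bar>) powr (\<beta> - 1)" if j: "j \<in> {2..n}" for j
  proof -
    have "\<bar>b j\<bar> = (\<nu> j * (\<bar>fv j\<bar> powr \<beta> / \<bar>fv j\<bar>)) / (\<nu> 1 * (\<bar>fv 1\<bar> powr \<beta> / \<bar>fv 1\<bar>))"
      using abs_u[OF fj[OF j]] abs_u[OF f1] \<nu>nn by (simp add: b_def a_def abs_mult)
    also have "\<dots> = \<nu> j / \<nu> 1 * (\<bar>fv j\<bar> / \<bar>fv 1\<bar>) powr (\<beta> - 1)"
      using fj[OF j] f1 \<nu>1 by (simp add: powr_divide powr_diff field_simps)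
    finally show ?thesis .
  qed
  interpret D: dil c "{2..n}" b r t q
  proof
    show "finite {2..n}" by simp
    show "r j \<noteq> 0" if "j \<in> {2..n}" for j using fj[OF that] f1 by (simp add: r_def)
    show "t j \<ge> 0" if "j \<in> {2..n}" for j using \<nu>1 \<nu>nn[of j] by (simp add: t_def)
    show "b j = 0" if j: "j \<in> {2..n}" and "t j = 0" for j
    proof -
      have "(\<bar>fv j\<bar> / \<bar>fv 1\<bar>) powr (\<beta> + (c - 1) / 2) > 0" using fj[OF j] f1 by simp
      then have "\<nu> j = 0" using \<open>t j = 0\<close> \<nu>1 by (simp add: t_def)
      then show ?thesis by (simp add: b_def a_def)
    qed
    show "(t j)\<^sup>2 = (b j)\<^sup>2 * \<bar>r j\<bar> powr -(1+c)" if j: "j \<in> {2..n}" for j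
    proof -
      define X where "X = \<bar>fv j\<bar> / \<bar>fv 1\<bar>"
      have X: "X > 0" using fj[OF j] f1 by (simp add: X_def)
      have r': "\<bar>r j\<bar> = 1 / X" by (simp add: r_def X_def abs_divide)
      have "(b j)\<^sup>2 = (\<bar>b j\<bar>)\<^sup>2" by simp
      also have "\<dots> = (\<nu> j / \<nu> 1)\<^sup>2 * (X powr (\<beta> - 1))\<^sup>2"
        unfolding absb[OF j] X_def by (simp add: power_mult_distrib power_divide field_simps)
      finally have "(b j)\<^sup>2 * \<bar>r j\<bar> powr -(1+c) = (\<nu> j / \<nu> 1)\<^sup>2 * ((X powr (\<beta> - 1))\<^sup>2 * (1 / X) powr -(1+c))"
        unfolding r' by simp
      also have "\<dots> = (\<nu> j / \<nu> 1)\<^sup>2 * (X powr (\<beta> + (c - 1) / 2))\<^sup>2"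
        using powr_alg[OF X, of \<beta> c] by simp
      also have "\<dots> = (t j)\<^sup>2" by (simp add: t_def X_def power_mult_distrib power_divide)
      finally show ?thesis by simp
    qed
    show "sum t {2..n} \<le> q" by (simp add: q_def)
    show "0 < q" by (simp add: q_def)
    show "q < 1" using q0 by (simp add: q_def)
  qed
  have rhs: "rhs_op u (simple_fun n fv \<Delta>) w x = a 1 * w (x / fv 1) + (\<Sum>j=2..n. a j * w (x / fv j))" for w x
  proof -
    have "rhs_op u (simple_fun n fv \<Delta>) w x = (\<Sum>j=1..n. a j * w (x / fv j))"
      unfolding rhs_sum[OF fv_nz \<Delta>_borel \<Delta>_disj \<Delta>_fin] by (simp add: a_def \<nu>_def mult.assoc)
    also have "\<dots> = a 1 * w (x / fv 1) + (\<Sum>j=2..n. a j * w (x / fv j))"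
      using n by (subst sum.atLeast_Suc_atMost) (auto simp: numeral_2_eq_2)
    finally show ?thesis .
  qed
  have vm[measurable]: "v \<in> borel_measurable borel" and Jv: "J c v < \<infinity>" using v by (auto simp: L2w_iff)
  define g where "g y = v (fv 1 * y) / a 1" for y
  have gm[measurable]: "g \<in> borel_measurable borel" unfolding g_def[abs_def] by measurable
  have Jg: "J c g < \<infinity>"
  proof -
    have "J c g = (\<integral>\<^sup>+y. ennreal (1 / (a 1)\<^sup>2) * ennreal ((v (fv 1 * y))\<^sup>2) \<partial>weighted_measure c)"
      unfolding J_def g_def
      by (intro nn_integral_cong) (subst ennreal_mult[symmetric], auto simp: power_divide)
    also have "\<dots> = ennreal (1 / (a 1)\<^sup>2) * (\<integral>\<^sup>+y. ennreal ((v (fv 1 * y))\<^sup>2) \<partial>weighted_measure c)"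
      by (rule nn_integral_cmult) measurable
    also have "\<dots> = ennreal (1 / (a 1)\<^sup>2) * (ennreal (\<bar>fv 1\<bar> powr -(1+c)) * J c v)"
      using J_dil[OF vm f1] by simp
    also have "\<dots> < \<infinity>" using Jv by (simp add: ennreal_mult_less_top)
    finally show ?thesis .
  qed
  define w where "w = D.Wf g"
  have ex: "w \<in> borel_measurable borel \<and> J c w < \<infinity> \<and> (AE y in lborel. w y = g y - D.K w y)"
    unfolding w_def by (rule D.exist[OF gm Jg])
  then have wm[measurable]: "w \<in> borel_measurable borel" and Jw: "J c w < \<infinity>"
    and aew: "AE y in lborel. w y = g y - D.K w y" by auto
  have L2: "L2w c w" using wm Jw by (simp add: L2w_iff)
  have sol: "AE x in weighted_measure c. v x = rhs_op u (simple_fun n fv \<Delta>) w x"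
    unfolding wm_AE
  proof -
    have "1 / fv 1 \<noteq> 0" using f1 by simp
    from AE_scale[OF aew this]
    have "AE x in lborel. w (1 / fv 1 * x) = g (1 / fv 1 * x) - D.K w (1 / fv 1 * x)" .
    then show "AE x in lborel. v x = rhs_op u (simple_fun n fv \<Delta>) w x"
    proof eventually_elim
      case (elim x)
      have K: "D.K w (x / fv 1) = (\<Sum>j=2..n. b j * w (x / fv j))"
        unfolding D.K_def by (rule sum.cong) (use f1 fj in \<open>auto simp: r_def\<close>)
      have e1: "w (x / fv 1) = v x / a 1 - D.K w (x / fv 1)"
        using elim f1 by (simp add: g_def)
      have "w (x / fv 1) = v x / a 1 - (\<Sum>j=2..n. b j * w (x / fv j))"
        using e1 unfolding K .
      then have "a 1 * w (x / fv 1) = v x - (\<Sum>j=2..n. a 1 * (b j * w (x / fv j)))"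
        using a1 by (simp add: field_simps sum_distrib_left)
      also have "(\<Sum>j=2..n. a 1 * (b j * w (x / fv j))) = (\<Sum>j=2..n. a j * w (x / fv j))"
        using a1 by (intro sum.cong) (auto simp: b_def)
      finally show ?case by (simp add: rhs)
    qed
  qed
  have uniq: "AE x in weighted_measure c. w' x = w x"
    if w': "L2w c w'" and ae': "AE x in weighted_measure c. v x = rhs_op u (simple_fun n fv \<Delta>) w' x" for w'
  proof -
    have w'm[measurable]: "w' \<in> borel_measurable borel" and Jw': "J c w' < \<infinity>"
      using w' by (auto simp: L2w_iff)
    define h where "h y = w' y - w y" for y
    have hm[measurable]: "h \<in> borel_measurable borel" unfolding h_def[abs_def] by measurable
    have Jh: "J c h < \<infinity>"
    proof -
      have "J c h \<le> (\<integral>\<^sup>+y. 2 * ennreal ((w' y)\<^sup>2) + 2 * ennreal ((w y)\<^sup>2) \<partial>weighted_measure c)"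
        unfolding J_def
      proof (rule nn_integral_mono)
        fix y
        have eq: "2 * (w' y)\<^sup>2 + 2 * (w y)\<^sup>2 - (h y)\<^sup>2 = (w' y + w y)\<^sup>2"
          unfolding h_def by (simp add: power2_eq_square algebra_simps)
        have "(h y)\<^sup>2 \<le> 2 * (w' y)\<^sup>2 + 2 * (w y)\<^sup>2"
          using eq zero_le_power2[of "w' y + w y"] by linarith
        then have "ennreal ((h y)\<^sup>2) \<le> ennreal (2 * (w' y)\<^sup>2 + 2 * (w y)\<^sup>2)" by (rule ennreal_leI)
        also have "\<dots> = 2 * ennreal ((w' y)\<^sup>2) + 2 * ennreal ((w y)\<^sup>2)"
          by (simp add: ennreal_plus ennreal_mult)
        finally show "ennreal ((h y)\<^sup>2) \<le> 2 * ennreal ((w' y)\<^sup>2) + 2 * ennreal ((w y)\<^sup>2)" .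
      qed
      also have "\<dots> = 2 * J c w' + 2 * J c w"
        unfolding J_def by (subst nn_integral_add) (auto simp: nn_integral_cmult)
      also have "\<dots> < \<infinity>" using Jw Jw' by (simp add: ennreal_mult_less_top)
      finally show ?thesis .
    qed
    have ae0: "AE x in lborel. a 1 * h (x / fv 1) + (\<Sum>j=2..n. a j * h (x / fv j)) = 0"
      using sol ae' unfolding wm_AE
    proof eventually_elim
      case (elim x)
      then have "a 1 * w (x / fv 1) + (\<Sum>j=2..n. a j * w (x / fv j)) = a 1 * w' (x / fv 1) + (\<Sum>j=2..n. a j * w' (x / fv j))"
        by (simp add: rhs)
      then show ?case by (simp add: h_def algebra_simps sum_subtractf)
    qed
    have aeh: "AE y in lborel. h y = - D.K h y"
      using AE_scale[OF ae0 f1]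
    proof eventually_elim
      case (elim y)
      have K: "D.K h y = (\<Sum>j=2..n. b j * h (fv 1 * y / fv j))"
        unfolding D.K_def by (rule sum.cong) (auto simp: r_def)
      have "(\<Sum>j=2..n. a j * h (fv 1 * y / fv j)) = a 1 * (\<Sum>j=2..n. b j * h (fv 1 * y / fv j))"
        using a1 by (simp add: sum_distrib_left b_def)
      then have "a 1 * h y + a 1 * D.K h y = 0" using elim f1 by (simp add: K)
      then have "a 1 * (h y + D.K h y) = 0" by (simp add: distrib_left)
      then have "h y + D.K h y = 0" using a1 by simp
      then show ?case by linarith
    qed
    have "AE y in lborel. h y = 0" by (rule D.uniq[OF hm Jh aeh])
    then show ?thesis unfolding wm_AE by eventually_elim (simp add: h_def)
  qed
  show ?thesis using L2 sol uniq by blast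
qed

end
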